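(* Fix $k\ge0$, $D\geq2$, and let $s^j:=(1-\frac jD)s_k+\frac jDs_{k+1}$, $j=0,\dots,D$, with $s^j\in\mathcal{S}$. Let $w^\ast(s^0)=w^\ast_k$ and, for $j=1,\dots,D$, let $w^\ast(s^j)$ be KKT points of $(P_{s^j})$ with $w^\ast(s^D)=w^\ast_{k+1}$. Let $\bar w_{k+1}$ be produced from $\bar w_k=(\bar z_k,\bar\mu_k)$ by the homotopy scheme: set $z:=\bar z_k$, $\mu:=\bar\mu_k$; for $j=1,\dots,D$: replace $z$ by the result of $M$ successive primal sweeps on $L_\rho(\cdot,\mu,s^j)$ started at $z$, then set $\mu:=\mu+\rho G(z,s^j)$; finally $\bar w_{k+1}:=(z,\mu)$. Assume that the standing hypotheses (A), (B), (C) hold for the parameter sequence $(s^j)_{j=0}^D$, the KKT points $(w^\ast(s^j))_{j=0}^D$ and the intermediate iterates $\bar w^j$ (the values of $(z,\mu)$ after step $j$, $\bar w^0=\bar w_k$), with the same constants. Assume $\beta_w(\rho,M)<1$, $\beta_s(\rho,M)<1$, let $r_w,r_s>0$ satisfy $r_w<q_B\rho$, $\delta-(1+\frac{\lambda_H\lambda_B}{\rho})r_w>0$, $r_s<\frac{(1-\beta_w(\rho,M))r_w}{\beta_s(\rho,M)}$ and $\lambda_H\lambda_Br_s<\delta-(1+\frac{\lambda_H\lambda_B}{\rho})r_w$. If $\|\bar w_k-w^\ast_k\|_2<r_w$, $\|s_{k+1}-s_k\|_2\le r_s$ and $\|s_{k+1}-s_k\|_2<\min\{r_A,r_B,\frac{q_B\rho}{\lambda_A\lambda_F}\}$,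 then $$\|\bar w_{k+1}-w^\ast_{k+1}\|_2\leq\beta_w(\rho,M)^D\|\bar w_k-w^\ast_k\|_2+\beta_s(\rho,M)\frac{\sum_{i=0}^{D-1}\beta_w(\rho,M)^i}{D}\|s_{k+1}-s_k\|_2.$$
   Context: Problem data: $z=(z_1,\dots,z_P)\in\mathbb{R}^{n_z}$; $\mathcal{Z}=\mathcal{Z}_1\times\cdots\times\mathcal{Z}_P$ a product of nonempty bounded boxes; $J(z)=\sum_iJ_i(z_i)$ with polynomials $J_i$; polynomial maps $Q_c:\mathbb{R}^{n_z}\to\mathbb{R}^m$, $g_i:\mathbb{R}^{n_i}\to\mathbb{R}^{q_i}$; $T_i\in\mathbb{R}^{q_i\times p}$; $q=\sum q_i$; $\mathcal{S}\subseteq\mathbb{R}^p$; $G(z,s)=(Q_c(z),g_1(z_1)+T_1s,\dots,g_P(z_P)+T_Ps)$; $L_\rho(z,\mu,s)=J(z)+(\mu+\frac\rho2G(z,s))^\top G(z,s)$; for $w=(z,\mu)$, $F(w,s)=(\nabla J(z)+\nabla_zG(z,s)^\top\mu,\ G(z,s))$; $\mathcal{N}:=\mathcal{N}_{\mathcal{Z}\times\mathbb{R}^{m+q}}$. A KKT point of $(P_s)$: $\min J(z)$ s.t. $G(z,s)=0$, $z\in\mathcal{Z}$, is $w$ with $0\in F(w,s)+\mathcal{N}(w)$. For a reference multiplier $\tilde\mu$: $H^{\tilde\mu}_\rho(w,d,s):=(\nabla J(z)+\nabla_zG(z,s)^\top\mu,\ G(z,s)+d+(\tilde\mu-\mu)/\rho)$.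 Constants: $\lambda_F:=P\max_i\|T_i\|_2$; $\lambda_H>0$ with $\|H^{\tilde\mu}_\rho(w,d,s)-H^{\tilde\mu}_\rho(w,d',s')\|\le\lambda_H\|(d,s)-(d',s')\|$ for all arguments; $\lambda_G>0$ a Lipschitz constant of $z\mapsto G(z,s)$ on $\mathcal{Z}$ (independent of $s$). Primal sweep on $L_\rho(\cdot,\mu,s)$: block-coordinate projected-gradient pass over $i=1,\dots,P$ in order, each block update $z_i\leftarrow\pi_{\mathcal{Z}_i}(z_i-\frac1{c_i}\nabla_{z_i}L_\rho)$ (gradient evaluated with already updated preceding blocks) with curvature $c_i$ obtained by backtracking (multiply by $\beta>1$ from an initial $c_i^0>0$) until $f(u)+\frac{\alpha_i}2\|u-z_i\|^2\le f(z_i)+\nabla f(z_i)^\top(u-z_i)+\frac{c_i}2\|u-z_i\|^2$ for the block function $f$, with $\alpha_i>0$. Standing hypotheses for a parameter sequence $(\sigma_j)_{j\ge0}\subset\mathcal{S}$, KKT points $w^\ast_j=(z^\ast_j,\mu^\ast_j)$ of $(P_{\sigma_j})$, and iterates $\bar w_j=(\bar z_j,\bar\mu_j)$ with $\bar z_{j+1}$ = result of $M$ sweeps on $L_\rho(\cdot,\bar\mu_j,\sigma_{j+1})$ from $\bar z_j$ and $\bar\mu_{j+1}=\bar\mu_j+\rho G(\bar z_{j+1},\sigma_{j+1})$; with $z^\infty_j$ the limit of infinitely many such sweeps, $w^\infty_j:=(z^\infty_j,\bar\mu_j+\rho G(z^\infty_j,\sigma_{j+1}))$, $d_j:=(\bar\mu_j-\mu^\ast_j)/\rho$;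 for every $j$: (A) constants $r_A,\delta_A,\lambda_A>0$ such that for every $s\in\mathcal{B}(\sigma_j,r_A)\cap\mathcal{S}$ there is a unique $w^\ast(s)\in\mathcal{B}(w^\ast_j,\delta_A)$ with $0\in F(w^\ast(s),s)+\mathcal{N}(w^\ast(s))$, $\|w^\ast(s)-w^\ast(s')\|\le\lambda_A\|F(w^\ast(s'),s)-F(w^\ast(s'),s')\|$ for $s,s'$ in that ball, and $w^\ast_{j+1}=w^\ast(\sigma_{j+1})$ whenever $\|\sigma_{j+1}-\sigma_j\|<r_A$; (B) constants $r_B,q_B,\lambda_B>0$, $\delta_B\ge\delta_A$ such that for all $d\in\mathcal{B}(0,q_B)$, $s\in\mathcal{B}(\sigma_j,r_B)\cap\mathcal{S}$ there is a unique $w^\ast_j(d,s)\in\mathcal{B}(w^\ast_j,\delta_B)$ with $0\in H^{\mu^\ast_j}_\rho(w^\ast_j(d,s),d,s)+\mathcal{N}(w^\ast_j(d,s))$ and $\|w^\ast_j(d,s)-w^\ast_j(d',s')\|\le\lambda_B\|H^{\mu^\ast_j}_\rho(w^\ast_j(d',s'),d,s)-H^{\mu^\ast_j}_\rho(w^\ast_j(d',s'),d',s')\|$; (C) constants $C,\delta,\psi>0$ such that $z^\infty_j$ exists, $w^\infty_j=w^\ast_j(d_j,\sigma_{j+1})$ whenever $d_j\in\mathcal{B}(0,q_B)$ and $\|\sigma_{j+1}-\sigma_j\|<r_B$, and $\|\bar z_j-z^\infty_j\|<\delta$ implies $\|\bar z_{j+1}-z^\infty_j\|\le CM^{-\psi}\|\bar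 z_j-z^\infty_j\|$. Coefficients: $\beta_w(\rho,M):=C(1+\rho\lambda_G)(1+\frac{\lambda_B\lambda_H}{\rho})M^{-\psi}+\frac{\lambda_B\lambda_H}{\rho}$ and $\beta_s(\rho,M):=C(1+\rho\lambda_G)\lambda_B\lambda_HM^{-\psi}+\frac{\lambda_B\lambda_H\lambda_A\lambda_F}{\rho}$. Here $\rho>0$ and $M\ge1$ are fixed; $(s_k)$ is a parameter sequence with KKT points $w^\ast_k$ of $(P_{s_k})$ and $\bar w_k=(\bar z_k,\bar\mu_k)$, $\bar z_k\in\mathcal{Z}$, the current suboptimal iterate. *)

theory Defs
  imports "HOL-Analysis.Analysis"
begin

inductive_set poly_fun :: "(real^'n \<Rightarrow> real) set" where
  pf_const: "(\<lambda>x. c) \<in> poly_fun"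
| pf_coord: "(\<lambda>x. x $ i) \<in> poly_fun"
| pf_add: "f \<in> poly_fun \<Longrightarrow> g \<in> poly_fun \<Longrightarrow> (\<lambda>x. f x + g x) \<in> poly_fun"
| pf_mult: "f \<in> poly_fun \<Longrightarrow> g \<in> poly_fun \<Longrightarrow> (\<lambda>x. f x * g x) \<in> poly_fun"

definition poly_map :: "(real^'n \<Rightarrow> real^'m) \<Rightarrow> bool" where
  "poly_map f \<longleftrightarrow> (\<forall>c. (\<lambda>x. f x $ c) \<in> poly_fun)"

definition block_local :: "('n \<Rightarrow> nat) \<Rightarrow> nat \<Rightarrow> (real^'n \<Rightarrow> 'b) \<Rightarrow> bool" where
  "block_local blk i f \<longleftrightarrow>
     (\<forall>z z'. (\<forall>x. blk x = i \<longrightarrow> z $ x = z' $ x) \<longrightarrow> f z = f z')"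

definition partial :: "(real^'n \<Rightarrow> real) \<Rightarrow> real^'n \<Rightarrow> 'n \<Rightarrow> real" where
  "partial f z x = frechet_derivative f (at z) (axis x 1)"

definition grad :: "(real^'n \<Rightarrow> real) \<Rightarrow> real^'n \<Rightarrow> real^'n" where
  "grad f z = (\<chi> x. partial f z x)"

definition jacT :: "(real^'n \<Rightarrow> real^'p \<Rightarrow> real^'c) \<Rightarrow> real^'n \<Rightarrow> real^'p \<Rightarrow> real^'c \<Rightarrow> real^'n" where
  "jacT G z s mu = (\<chi> x. \<Sum>c\<in>UNIV. mu $ c * partial (\<lambda>y. G y s $ c) z x)"

definition boxZ :: "real^'n \<Rightarrow> real^'n \<Rightarrow> (real^'n) set" where
  "boxZ lo hi = {z. \<forall>x. lo $ x \<le> z $ x \<and> z $ x \<le> hi $ x}"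

text \<open>Constraint map G(z,s) = (Q_c(z), g_1(z_1)+T_1 s, ..., g_P(z_P)+T_P s).
  Constraint components c with cblk c = 0 belong to Q_c, those with cblk c = i to block i.\<close>
definition Gmap :: "('c \<Rightarrow> nat) \<Rightarrow> (real^'n \<Rightarrow> real^'c) \<Rightarrow> (real^'n \<Rightarrow> real^'c)
    \<Rightarrow> real^'p^'c \<Rightarrow> real^'n \<Rightarrow> real^'p \<Rightarrow> real^'c" where
  "Gmap cblk Qc gg T z s = (\<chi> c. if cblk c = 0 then Qc z $ c else gg z $ c + (T *v s) $ c)"

text \<open>T_i as a linear map R^p -> R^q (rows of block i, zero-padded; padding does not change the 2-norm)\<close>
definition Tblock :: "('c \<Rightarrow> nat) \<Rightarrow> real^'p^'c \<Rightarrow> nat \<Rightarrow> real^'p \<Rightarrow> real^'c" where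
  "Tblock cblk T i s = (\<chi> c. if cblk c = i then (T *v s) $ c else 0)"

definition lamF :: "nat \<Rightarrow> ('c \<Rightarrow> nat) \<Rightarrow> real^'p^'c \<Rightarrow> real" where
  "lamF P cblk T = real P * Max ((\<lambda>i. onorm (Tblock cblk T i)) ` {1..P})"

definition Lrho :: "(real^'n \<Rightarrow> real) \<Rightarrow> (real^'n \<Rightarrow> real^'p \<Rightarrow> real^'c) \<Rightarrow> real
    \<Rightarrow> real^'n \<Rightarrow> real^'c \<Rightarrow> real^'p \<Rightarrow> real" where
  "Lrho J G rho z mu s = J z + (mu + (rho / 2) *\<^sub>R G z s) \<bullet> G z s"

definition Fmap :: "(real^'n \<Rightarrow> real) \<Rightarrow> (real^'n \<Rightarrow> real^'p \<Rightarrow> real^'c)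
    \<Rightarrow> (real^'n) \<times> (real^'c) \<Rightarrow> real^'p \<Rightarrow> (real^'n) \<times> (real^'c)" where
  "Fmap J G w s = (grad J (fst w) + jacT G (fst w) s (snd w), G (fst w) s)"

definition Hmap :: "(real^'n \<Rightarrow> real) \<Rightarrow> (real^'n \<Rightarrow> real^'p \<Rightarrow> real^'c) \<Rightarrow> real \<Rightarrow> real^'c
    \<Rightarrow> (real^'n) \<times> (real^'c) \<Rightarrow> real^'c \<Rightarrow> real^'p \<Rightarrow> (real^'n) \<times> (real^'c)" where
  "Hmap J G rho mut w d s =
     (grad J (fst w) + jacT G (fst w) s (snd w),
      G (fst w) s + d + (1 / rho) *\<^sub>R (mut - snd w))"

definition normal_cone :: "'a::real_inner set \<Rightarrow> 'a \<Rightarrow> 'a set" where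
  "normal_cone C x = (if x \<in> C then {v. \<forall>y\<in>C. v \<bullet> (y - x) \<le> 0} else {})"

definition gen_eq :: "(real^'n) set \<Rightarrow> (real^'n) \<times> (real^'c) \<Rightarrow> (real^'n) \<times> (real^'c) \<Rightarrow> bool" where
  "gen_eq Z V w \<longleftrightarrow> (\<exists>v \<in> normal_cone (Z \<times> UNIV) w. V + v = 0)"

definition is_KKT :: "(real^'n \<Rightarrow> real) \<Rightarrow> (real^'n \<Rightarrow> real^'p \<Rightarrow> real^'c) \<Rightarrow> (real^'n) set
    \<Rightarrow> (real^'n) \<times> (real^'c) \<Rightarrow> real^'p \<Rightarrow> bool" where
  "is_KKT J G Z w s \<longleftrightarrow> gen_eq Z (Fmap J G w s) w"

definition bgrad :: "('n \<Rightarrow> nat) \<Rightarrow> nat \<Rightarrow> (real^'n \<Rightarrow> real) \<Rightarrow> real^'n \<Rightarrow> real^'n" where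
  "bgrad blk i f z = (\<chi> x. if blk x = i then grad f z $ x else 0)"

text \<open>trial block update: z_i <- proj_{Z_i}(z_i - (1/c) grad_{z_i} f), other blocks unchanged\<close>
definition block_trial :: "('n \<Rightarrow> nat) \<Rightarrow> (real^'n) set \<Rightarrow> nat \<Rightarrow> (real^'n \<Rightarrow> real)
    \<Rightarrow> real^'n \<Rightarrow> real \<Rightarrow> real^'n" where
  "block_trial blk Z i f z c =
     closest_point {y. y \<in> Z \<and> (\<forall>x. blk x \<noteq> i \<longrightarrow> y $ x = z $ x)} (z - (1 / c) *\<^sub>R bgrad blk i f z)"

definition bt_accept :: "('n \<Rightarrow> nat) \<Rightarrow> (real^'n) set \<Rightarrow> nat \<Rightarrow> (real^'n \<Rightarrow> real)
    \<Rightarrow> real \<Rightarrow> real^'n \<Rightarrow> real \<Rightarrow> bool" where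
  "bt_accept blk Z i f a z c \<longleftrightarrow>
     (let u = block_trial blk Z i f z c in
      f u + (a / 2) * (norm (u - z))\<^sup>2
        \<le> f z + bgrad blk i f z \<bullet> (u - z) + (c / 2) * (norm (u - z))\<^sup>2)"

definition bt_curv :: "('n \<Rightarrow> nat) \<Rightarrow> (real^'n) set \<Rightarrow> nat \<Rightarrow> (real^'n \<Rightarrow> real)
    \<Rightarrow> real \<Rightarrow> real \<Rightarrow> real \<Rightarrow> real^'n \<Rightarrow> real" where
  "bt_curv blk Z i f a c0 beta z = c0 * beta ^ (LEAST k. bt_accept blk Z i f a z (c0 * beta ^ k))"

definition block_update :: "('n \<Rightarrow> nat) \<Rightarrow> (real^'n) set \<Rightarrow> nat \<Rightarrow> (real^'n \<Rightarrow> real)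
    \<Rightarrow> real \<Rightarrow> real \<Rightarrow> real \<Rightarrow> real^'n \<Rightarrow> real^'n" where
  "block_update blk Z i f a c0 beta z = block_trial blk Z i f z (bt_curv blk Z i f a c0 beta z)"

definition sweep :: "(real^'n \<Rightarrow> real) \<Rightarrow> (real^'n \<Rightarrow> real^'p \<Rightarrow> real^'c) \<Rightarrow> ('n \<Rightarrow> nat)
    \<Rightarrow> (real^'n) set \<Rightarrow> nat \<Rightarrow> (nat \<Rightarrow> real) \<Rightarrow> (nat \<Rightarrow> real) \<Rightarrow> real \<Rightarrow> real
    \<Rightarrow> real^'c \<Rightarrow> real^'p \<Rightarrow> real^'n \<Rightarrow> real^'n" where
  "sweep J G blk Z P alpha c0 beta rho mu s z =
     foldl (\<lambda>y i. block_update blk Z i (\<lambda>v. Lrho J G rho v mu s) (alpha i) (c0 i) beta y) z [1..<P+1]"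

primrec hom_iter :: "(real^'c \<Rightarrow> real^'p \<Rightarrow> real^'n \<Rightarrow> real^'n) \<Rightarrow> (real^'n \<Rightarrow> real^'p \<Rightarrow> real^'c)
    \<Rightarrow> real \<Rightarrow> nat \<Rightarrow> (nat \<Rightarrow> real^'p) \<Rightarrow> (real^'n) \<times> (real^'c) \<Rightarrow> nat \<Rightarrow> (real^'n) \<times> (real^'c)" where
  "hom_iter sw G rho M sg w0 0 = w0"
| "hom_iter sw G rho M sg w0 (Suc j) =
     (let z = (sw (snd (hom_iter sw G rho M sg w0 j)) (sg (Suc j)) ^^ M)
                (fst (hom_iter sw G rho M sg w0 j))
      in (z, snd (hom_iter sw G rho M sg w0 j) + rho *\<^sub>R G z (sg (Suc j))))"

definition beta_w :: "real \<Rightarrow> real \<Rightarrow> real \<Rightarrow> real \<Rightarrow> real \<Rightarrow> real \<Rightarrow> nat \<Rightarrow> real" where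
  "beta_w C lamG lamB lamH psi rho M =
     C * (1 + rho * lamG) * (1 + lamB * lamH / rho) * real M powr (- psi) + lamB * lamH / rho"

definition beta_s :: "real \<Rightarrow> real \<Rightarrow> real \<Rightarrow> real \<Rightarrow> real \<Rightarrow> real \<Rightarrow> real \<Rightarrow> real \<Rightarrow> nat \<Rightarrow> real" where
  "beta_s C lamG lamB lamH lamA lamFc psi rho M =
     C * (1 + rho * lamG) * lamB * lamH * real M powr (- psi) + lamB * lamH * lamA * lamFc / rho"


definition hypA :: "(real^'n \<Rightarrow> real) \<Rightarrow> (real^'n \<Rightarrow> real^'p \<Rightarrow> real^'c) \<Rightarrow> (real^'n) set
    \<Rightarrow> (real^'p) set \<Rightarrow> (nat \<Rightarrow> real^'p) \<Rightarrow> (nat \<Rightarrow> (real^'n) \<times> (real^'c)) \<Rightarrow> nat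
    \<Rightarrow> real \<Rightarrow> real \<Rightarrow> real \<Rightarrow> (real^'p \<Rightarrow> (real^'n) \<times> (real^'c)) \<Rightarrow> bool" where
  "hypA J G Z S sig wst j rA dA lamA wA \<longleftrightarrow>
     (\<forall>s \<in> ball (sig j) rA \<inter> S.
        wA s \<in> ball (wst j) dA \<and> is_KKT J G Z (wA s) s \<and>
        (\<forall>w \<in> ball (wst j) dA. is_KKT J G Z w s \<longrightarrow> w = wA s)) \<and>
     (\<forall>s \<in> ball (sig j) rA \<inter> S. \<forall>s' \<in> ball (sig j) rA \<inter> S.
        norm (wA s - wA s') \<le> lamA * norm (Fmap J G (wA s') s - Fmap J G (wA s') s')) \<and>
     (norm (sig (Suc j) - sig j) < rA \<longrightarrow> wst (Suc j) = wA (sig (Suc j)))"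

definition hypB :: "(real^'n \<Rightarrow> real) \<Rightarrow> (real^'n \<Rightarrow> real^'p \<Rightarrow> real^'c) \<Rightarrow> (real^'n) set \<Rightarrow> real
    \<Rightarrow> (real^'p) set \<Rightarrow> (nat \<Rightarrow> real^'p) \<Rightarrow> (nat \<Rightarrow> (real^'n) \<times> (real^'c)) \<Rightarrow> nat
    \<Rightarrow> real \<Rightarrow> real \<Rightarrow> real \<Rightarrow> real \<Rightarrow> (real^'c \<Rightarrow> real^'p \<Rightarrow> (real^'n) \<times> (real^'c)) \<Rightarrow> bool" where
  "hypB J G Z rho S sig wst j rB qB lamB dB wB \<longleftrightarrow>
     (\<forall>d \<in> ball 0 qB. \<forall>s \<in> ball (sig j) rB \<inter> S.
        wB d s \<in> ball (wst j) dB \<and>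
        gen_eq Z (Hmap J G rho (snd (wst j)) (wB d s) d s) (wB d s) \<and>
        (\<forall>w \<in> ball (wst j) dB. gen_eq Z (Hmap J G rho (snd (wst j)) w d s) w \<longrightarrow> w = wB d s)) \<and>
     (\<forall>d \<in> ball 0 qB. \<forall>s \<in> ball (sig j) rB \<inter> S. \<forall>d' \<in> ball 0 qB. \<forall>s' \<in> ball (sig j) rB \<inter> S.
        norm (wB d s - wB d' s') \<le>
          lamB * norm (Hmap J G rho (snd (wst j)) (wB d' s') d s
                       - Hmap J G rho (snd (wst j)) (wB d' s') d' s'))"

definition hypC :: "(real^'n \<Rightarrow> real^'p \<Rightarrow> real^'c) \<Rightarrow> real
    \<Rightarrow> (real^'c \<Rightarrow> real^'p \<Rightarrow> real^'n \<Rightarrow> real^'n) \<Rightarrow> (nat \<Rightarrow> (real^'n) \<times> (real^'c))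
    \<Rightarrow> (nat \<Rightarrow> real^'p) \<Rightarrow> (nat \<Rightarrow> (real^'n) \<times> (real^'c)) \<Rightarrow> nat \<Rightarrow> nat
    \<Rightarrow> real \<Rightarrow> real \<Rightarrow> real \<Rightarrow> real \<Rightarrow> real \<Rightarrow> (real^'c \<Rightarrow> real^'p \<Rightarrow> (real^'n) \<times> (real^'c)) \<Rightarrow> bool" where
  "hypC G rho sw wbar sig wst j M qB rB C delta psi wB \<longleftrightarrow>
     (\<exists>zinf. (\<lambda>n. (sw (snd (wbar j)) (sig (Suc j)) ^^ n) (fst (wbar j))) \<longlonglongrightarrow> zinf \<and>
        (let winf = (zinf, snd (wbar j) + rho *\<^sub>R G zinf (sig (Suc j)));
             d = (1 / rho) *\<^sub>R (snd (wbar j) - snd (wst j))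
         in (d \<in> ball 0 qB \<and> norm (sig (Suc j) - sig j) < rB \<longrightarrow> winf = wB d (sig (Suc j))) \<and>
            (norm (fst (wbar j) - zinf) < delta \<longrightarrow>
               norm (fst (wbar (Suc j)) - zinf) \<le> C * real M powr (- psi) * norm (fst (wbar j) - zinf))))"

end

theory Submission
  imports Defs
begin

lemma box_closed: "closed (boxZ lo hi)"
  unfolding boxZ_def
  by (intro closed_Collect_all closed_Collect_conj closed_Collect_le continuous_intros)

lemma trial_in:
  assumes "z \<in> boxZ lo hi"
  shows "block_trial blk (boxZ lo hi) i f z c \<in> boxZ lo hi"
proof -
  let ?K = "{y. y \<in> boxZ lo hi \<and> (\<forall>x. blk x \<noteq> i \<longrightarrow> y $ x = z $ x)}"
  have cl1: "closed {y. y $ x = z $ x}" for x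
    by (intro closed_Collect_eq continuous_intros)
  have cl2: "closed {y. blk x \<noteq> i \<longrightarrow> y $ x = z $ x}" for x
  proof (cases "blk x = i")
    case True
    then show ?thesis by simp
  next
    case False
    then show ?thesis using cl1[of x] by simp
  qed
  have cl3: "closed {y. \<forall>x. blk x \<noteq> i \<longrightarrow> y $ x = z $ x}"
    by (rule closed_Collect_all) (rule cl2)
  have "?K = boxZ lo hi \<inter> {y. \<forall>x. blk x \<noteq> i \<longrightarrow> y $ x = z $ x}"
    by (simp only: Collect_conj_eq Collect_mem_eq)
  then have clK: "closed ?K" using closed_Int[OF box_closed cl3] by (simp only:)
  have "z \<in> ?K" using assms by blast
  then have neK: "?K \<noteq> {}" by blast
  have "closest_point ?K (z - (1 / c) *\<^sub>R bgrad blk i f z) \<in> ?K"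
    by (rule closest_point_in_set[OF clK neK])
  then have "closest_point ?K (z - (1 / c) *\<^sub>R bgrad blk i f z) \<in> boxZ lo hi" by blast
  then show ?thesis unfolding block_trial_def .
qed

lemma foldl_in: "(\<And>y i. y \<in> B \<Longrightarrow> g y i \<in> B) \<Longrightarrow> z \<in> B \<Longrightarrow> foldl g z xs \<in> B"
  by (induction xs arbitrary: z) auto

lemma sweep_in: "z \<in> boxZ lo hi \<Longrightarrow> sweep J G blk (boxZ lo hi) P alpha c0 bt rho mu s z \<in> boxZ lo hi"
  unfolding sweep_def block_update_def
  by (rule foldl_in) (auto intro: trial_in)

lemma funpow_in: "(\<And>y. y \<in> B \<Longrightarrow> f y \<in> B) \<Longrightarrow> z \<in> B \<Longrightarrow> (f ^^ n) z \<in> B"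
  by (induction n) auto

lemma fd_aux1: "((\<lambda>y. f y + k) has_derivative D) F \<Longrightarrow> ((\<lambda>y. f y + k + - k) has_derivative D) F"
  by (rule has_derivative_add_const)
lemma fd_aux2: "(\<lambda>y. f y + k + - k) = (f::'a\<Rightarrow>'b::real_normed_vector)"
  by (rule ext) simp
lemma fd_aux3: "(f has_derivative D) F \<Longrightarrow> ((\<lambda>y. f y + k) has_derivative D) F"
  by (rule has_derivative_add_const)
lemma fd_aux4: "((\<lambda>y. f y + k) has_derivative D) F = (f has_derivative D) F"
  using fd_aux1[of f k D F] fd_aux2[of f k] fd_aux3[of f D F k] by metis

lemma fd_add_const: "frechet_derivative (\<lambda>y. f y + k) F = frechet_derivative f F"
  unfolding frechet_derivative_def by (subst fd_aux4) (rule refl)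

lemma Gdiff:
  assumes "\<forall>c. cblk c \<in> {0..P}"
  shows "Gmap cblk Qc gg T z s - Gmap cblk Qc gg T z s' = (\<Sum>i\<in>{1..P}. Tblock cblk T i (s - s'))"
proof -
  have "(Gmap cblk Qc gg T z s - Gmap cblk Qc gg T z s') $ c = (\<Sum>i\<in>{1..P}. Tblock cblk T i (s - s')) $ c" for c
  proof -
    have e1: "(\<Sum>i\<in>{1..P}. Tblock cblk T i (s - s')) $ c
        = (\<Sum>i\<in>{1..P}. if cblk c = i then (T *v (s - s')) $ c else 0)"
      unfolding sum_component Tblock_def by simp
    have e2: "(\<Sum>i\<in>{1..P}. if cblk c = i then (T *v (s - s')) $ c else 0)
        = (if cblk c \<in> {1..P} then (T *v (s - s')) $ c else 0)"
      by (rule sum.delta') simp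
    have e3: "(Gmap cblk Qc gg T z s - Gmap cblk Qc gg T z s') $ c
        = (if cblk c = 0 then 0 else (T *v s) $ c - (T *v s') $ c)"
      unfolding Gmap_def vector_minus_component vec_lambda_beta by simp
    have e4: "(T *v (s - s')) $ c = (T *v s) $ c - (T *v s') $ c"
      by (simp only: matrix_vector_mult_diff_distrib vector_minus_component)
    have r: "cblk c \<in> {0..P}" using assms by blast
    show ?thesis
    proof (cases "cblk c = 0")
      case True
      then show ?thesis unfolding e1 e2 e3 by simp
    next
      case False
      then have "cblk c \<in> {1..P}" using r by auto
      then show ?thesis unfolding e1 e2 e3 e4 using False by simp
    qed
  qed
  then show ?thesis by (simp add: vec_eq_iff)
qed

lemma Tblock_bl: "bounded_linear (Tblock cblk T i)"
proof -
  have "linear (Tblock cblk T i)"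
  proof (rule linearI)
    fix x y :: "real^'a" and r :: real
    show "Tblock cblk T i (x + y) = Tblock cblk T i x + Tblock cblk T i y"
      unfolding Tblock_def vec_eq_iff by (simp add: matrix_vector_right_distrib)
    show "Tblock cblk T i (r *\<^sub>R x) = r *\<^sub>R Tblock cblk T i x"
      unfolding Tblock_def vec_eq_iff by (simp add: matrix_vector_mult_scaleR)
  qed
  then show ?thesis by (simp add: linear_conv_bounded_linear)
qed


lemma partial_G_eq:
  "partial (\<lambda>y. Gmap cblk Qc gg T y s $ c) z x = partial (\<lambda>y. Gmap cblk Qc gg T y s' $ c) z x"
proof (cases "cblk c = 0")
  case True
  then show ?thesis by (simp add: Gmap_def)
next
  case False
  have e: "(\<lambda>y. Gmap cblk Qc gg T y t $ c) = (\<lambda>y. gg y $ c + (T *v t) $ c)" for t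
    using False by (simp add: Gmap_def)
  show ?thesis unfolding e partial_def by (subst fd_add_const, subst fd_add_const) (rule refl)
qed

lemma jacT_G_eq: "jacT (Gmap cblk Qc gg T) z s mu = jacT (Gmap cblk Qc gg T) z s' mu"
  unfolding jacT_def by (simp only: partial_G_eq[of cblk Qc gg T s _ z _ s'])

lemma Fdiff:
  assumes "\<forall>c. cblk c \<in> {0..P}" and "1 \<le> P"
  shows "norm (Fmap J (Gmap cblk Qc gg T) w s - Fmap J (Gmap cblk Qc gg T) w s') \<le> lamF P cblk T * norm (s - s')"
proof -
  let ?G = "Gmap cblk Qc gg T"
  let ?m = "Max ((\<lambda>i. onorm (Tblock cblk T i)) ` {1..P})"
  have "Fmap J ?G w s - Fmap J ?G w s' = (0, ?G (fst w) s - ?G (fst w) s')"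
    unfolding Fmap_def jacT_G_eq[of cblk Qc gg T "fst w" s "snd w" s'] by simp
  then have "norm (Fmap J ?G w s - Fmap J ?G w s') = norm (?G (fst w) s - ?G (fst w) s')"
    by (simp add: norm_Pair)
  also have "\<dots> = norm (\<Sum>i\<in>{1..P}. Tblock cblk T i (s - s'))"
    by (simp only: Gdiff[OF assms(1)])
  also have "\<dots> \<le> (\<Sum>i\<in>{1..P}. norm (Tblock cblk T i (s - s')))"
    by (rule norm_sum)
  also have "\<dots> \<le> (\<Sum>i\<in>{1..P}. ?m * norm (s - s'))"
  proof (rule sum_mono)
    fix i assume i: "i \<in> {1..P}"
    have "norm (Tblock cblk T i (s - s')) \<le> onorm (Tblock cblk T i) * norm (s - s')"
      by (rule onorm[OF Tblock_bl])
    also have "onorm (Tblock cblk T i) \<le> ?m"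
      by (rule Max_ge) (use i in simp_all)
    then have "onorm (Tblock cblk T i) * norm (s - s') \<le> ?m * norm (s - s')"
      by (rule mult_right_mono) simp
    finally show "norm (Tblock cblk T i (s - s')) \<le> ?m * norm (s - s')" .
  qed
  also have "\<dots> = lamF P cblk T * norm (s - s')"
    unfolding lamF_def by simp
  finally show ?thesis .
qed

lemma nsnd: "norm (snd v) \<le> norm v"
  by (cases v) (simp add: norm_snd_le)
lemma nfst: "norm (fst v) \<le> norm v"
  by (cases v) (simp add: norm_fst_le)

theorem mainTheorem12:
  fixes blk :: "'z::finite \<Rightarrow> nat" and cblk :: "'c::finite \<Rightarrow> nat" and P :: nat
    and lo hi :: "real^'z"
    and Jb :: "nat \<Rightarrow> real^'z \<Rightarrow> real" and J :: "real^'z \<Rightarrow> real"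
    and Qc gg :: "real^'z \<Rightarrow> real^'c" and T :: "real^('p::finite)^'c"
    and G :: "real^'z \<Rightarrow> real^'p \<Rightarrow> real^'c"
    and S :: "(real^'p) set"
    and alpha c0 :: "nat \<Rightarrow> real" and bt rho :: real and M D :: nat
    and sk sk1 :: "real^'p" and sig :: "nat \<Rightarrow> real^'p"
    and wst :: "nat \<Rightarrow> (real^'z) \<times> (real^'c)"
    and zk :: "real^'z" and muk :: "real^'c"
    and rA dA lamA rB qB lamB dB C delta psi lamH lamG rw rs :: real
  assumes
    \<comment> \<open>problem data\<close>
        P_pos: "1 \<le> P"
    and blk_range: "\<forall>x. blk x \<in> {1..P}"
    and cblk_range: "\<forall>c. cblk c \<in> {0..P}"
    and box_nonempty: "\<forall>x. lo $ x \<le> hi $ x"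
    and J_def: "J = (\<lambda>z. \<Sum>i\<in>{1..P}. Jb i z)"
    and Jb_poly: "\<forall>i\<in>{1..P}. Jb i \<in> poly_fun \<and> block_local blk i (Jb i)"
    and Qc_poly: "poly_map Qc"
    and gg_poly: "poly_map gg"
    and gg_local: "\<forall>c. cblk c \<noteq> 0 \<longrightarrow> block_local blk (cblk c) (\<lambda>z. gg z $ c)"
    and G_def: "G = Gmap cblk Qc gg T"
    \<comment> \<open>algorithm parameters\<close>
    and alpha_pos: "\<forall>i\<in>{1..P}. alpha i > 0"
    and c0_pos: "\<forall>i\<in>{1..P}. c0 i > 0"
    and bt_gt1: "bt > 1"
    and rho_pos: "rho > 0" and M_ge1: "M \<ge> 1"
    \<comment> \<open>Lipschitz constants lambda_H and lambda_G\<close>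
    and lamH_pos: "lamH > 0"
    and lamH_Lip: "\<forall>mut w d s d' s'.
          norm (Hmap J G rho mut w d s - Hmap J G rho mut w d' s') \<le> lamH * norm ((d, s) - (d', s'))"
    and lamG_pos: "lamG > 0"
    and lamG_Lip: "\<forall>s. \<forall>z\<in>boxZ lo hi. \<forall>z'\<in>boxZ lo hi. norm (G z s - G z' s) \<le> lamG * norm (z - z')"
    \<comment> \<open>homotopy grid\<close>
    and D_ge2: "D \<ge> 2"
    and sig_def: "\<forall>j. sig j = (1 - real j / real D) *\<^sub>R sk + (real j / real D) *\<^sub>R sk1"
    and sig_S: "\<forall>j\<le>D. sig j \<in> S"
    and wst_KKT: "\<forall>j\<le>D. is_KKT J G (boxZ lo hi) (wst j) (sig j)"
    and zk_Z: "zk \<in> boxZ lo hi"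
    \<comment> \<open>standing hypotheses (A), (B), (C) with common constants\<close>
    and consts_pos: "rA > 0" "dA > 0" "lamA > 0" "rB > 0" "qB > 0" "lamB > 0" "dB \<ge> dA"
                    "C > 0" "delta > 0" "psi > 0"
    and hyps: "\<forall>j<D. \<exists>wA wB.
          hypA J G (boxZ lo hi) S sig wst j rA dA lamA wA \<and>
          hypB J G (boxZ lo hi) rho S sig wst j rB qB lamB dB wB \<and>
          hypC G rho (sweep J G blk (boxZ lo hi) P alpha c0 bt rho)
               (hom_iter (sweep J G blk (boxZ lo hi) P alpha c0 bt rho) G rho M sig (zk, muk))
               sig wst j M qB rB C delta psi wB"
    \<comment> \<open>contraction and radius conditions\<close>
    and bw_lt1: "beta_w C lamG lamB lamH psi rho M < 1"
    and bs_lt1: "beta_s C lamG lamB lamH lamA (lamF P cblk T) psi rho M < 1"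
    and rw_pos: "rw > 0" and rs_pos: "rs > 0"
    and rw_lt: "rw < qB * rho"
    and rw_delta: "delta - (1 + lamH * lamB / rho) * rw > 0"
    and rs_lt: "rs < (1 - beta_w C lamG lamB lamH psi rho M) * rw
                      / beta_s C lamG lamB lamH lamA (lamF P cblk T) psi rho M"
    and rs_delta: "lamH * lamB * rs < delta - (1 + lamH * lamB / rho) * rw"
    \<comment> \<open>initial closeness and parameter step\<close>
    and init_close: "norm ((zk, muk) - wst 0) < rw"
    and step_rs: "norm (sk1 - sk) \<le> rs"
    and step_small: "norm (sk1 - sk) < min rA (min rB (qB * rho / (lamA * lamF P cblk T)))"
  shows "norm (hom_iter (sweep J G blk (boxZ lo hi) P alpha c0 bt rho) G rho M sig (zk, muk) D - wst D)
           \<le> beta_w C lamG lamB lamH psi rho M ^ D * norm ((zk, muk) - wst 0)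
             + beta_s C lamG lamB lamH lamA (lamF P cblk T) psi rho M
               * (\<Sum>i<D. beta_w C lamG lamB lamH psi rho M ^ i) / real D * norm (sk1 - sk)"
  proof -
  define sw where "sw = sweep J G blk (boxZ lo hi) P alpha c0 bt rho"
  define wbar where "wbar = hom_iter sw G rho M sig (zk, muk)"
  define bw where "bw = beta_w C lamG lamB lamH psi rho M"
  define bs where "bs = beta_s C lamG lamB lamH lamA (lamF P cblk T) psi rho M"
  define lF where "lF = lamF P cblk T"
  define e where "e = (\<lambda>j. norm (wbar j - wst j))"
  define h where "h = norm (sk1 - sk) / real D"
  define K where "K = C * real M powr (- psi)"
  note hyps1 = hyps[folded sw_def]
  note hyps2 = hyps1[folded wbar_def]
  have Dpos: "real D > 0" using D_ge2 by simp
  have sw_in: "\<And>y mu s. y \<in> boxZ lo hi \<Longrightarrow> sw mu s y \<in> boxZ lo hi"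
    unfolding sw_def by (rule sweep_in)
  have wbar_Suc: "snd (wbar (Suc j)) = snd (wbar j) + rho *\<^sub>R G (fst (wbar (Suc j))) (sig (Suc j))
     \<and> fst (wbar (Suc j)) = (sw (snd (wbar j)) (sig (Suc j)) ^^ M) (fst (wbar j))" for j
    by (simp add: wbar_def Let_def)
  have fact_box: "fst (wbar j) \<in> boxZ lo hi" for j
  proof (induction j)
    case 0 then show ?case using zk_Z by (simp add: wbar_def)
  next
    case (Suc j)
    have "\<And>y. y \<in> boxZ lo hi \<Longrightarrow> sw (snd (wbar j)) (sig (Suc j)) y \<in> boxZ lo hi" by (rule sw_in)
    from funpow_in[OF this Suc.IH] show ?case unfolding conjunct2[OF wbar_Suc[of j]] .
  qed
  have K_nonneg: "K \<ge> 0" unfolding K_def using consts_pos by simp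
  have h_nonneg: "h \<ge> 0" unfolding h_def by simp
  have D1: "1 \<le> real D" using D_ge2 by simp
  have h_le: "h \<le> norm (sk1 - sk)"
  proof -
    have "norm (sk1 - sk) / real D \<le> norm (sk1 - sk) / 1"
      by (rule divide_left_mono[OF D1]) (use Dpos in auto)
    then show ?thesis unfolding h_def by simp
  qed
  have h_rs: "h \<le> rs" using h_le step_rs by simp
  have hrA: "h < rA" and hrB: "h < rB" using h_le step_small by auto
  have ss_q: "norm (sk1 - sk) < qB * rho / (lamA * lF)" using step_small unfolding lF_def by simp
  have lAF_pos: "lamA * lF > 0"
  proof (rule ccontr)
    assume "\<not> lamA * lF > 0"
    then have "qB * rho / (lamA * lF) \<le> 0" using consts_pos rho_pos
      by (simp add: divide_nonneg_nonpos)
    then show False using ss_q norm_ge_zero[of "sk1 - sk"] by linarith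
  qed
  have lAF_h: "lamA * lF * h < qB * rho"
  proof -
    from ss_q have "norm (sk1 - sk) * (lamA * lF) < qB * rho" using lAF_pos by (simp add: pos_less_divide_eq)
    moreover have "h * (lamA * lF) \<le> norm (sk1 - sk) * (lamA * lF)"
      using h_le lAF_pos by (simp add: mult_right_mono)
    ultimately show ?thesis by (simp add: mult.commute)
  qed
  have bs_pos: "bs > 0"
  proof (rule ccontr)
    assume "\<not> bs > 0"
    then have "(1 - bw) * rw / bs \<le> 0" using bw_lt1 rw_pos unfolding bw_def
      by (simp add: divide_nonneg_nonpos)
    then show False using rs_lt rs_pos unfolding bw_def bs_def by simp
  qed
  have bw_nonneg: "bw \<ge> 0" unfolding bw_def beta_w_def using consts_pos rho_pos lamG_pos lamH_pos
    by (intro add_nonneg_nonneg mult_nonneg_nonneg) auto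
  have bsrs: "bs * rs < (1 - bw) * rw"
    using rs_lt bs_pos unfolding bw_def bs_def by (simp add: pos_less_divide_eq mult.commute)
  have step: "e (Suc j) \<le> bw * e j + bs * h" if jD: "j < D" and ej: "e j < rw" for j
  proof -
    from hyps2 jD obtain wA wB where
      hA: "hypA J G (boxZ lo hi) S sig wst j rA dA lamA wA" and
      hB: "hypB J G (boxZ lo hi) rho S sig wst j rB qB lamB dB wB" and
      hC: "hypC G rho sw wbar sig wst j M qB rB C delta psi wB" by blast
    have sj: "sig j \<in> S" "sig (Suc j) \<in> S" using sig_S jD by auto
    have sdiff: "sig (Suc j) - sig j = (1 / real D) *\<^sub>R (sk1 - sk)"
      unfolding sig_def[rule_format] using Dpos
      by (simp add: algebra_simps add_divide_distrib diff_divide_distrib scaleR_diff_right)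
    have hnorm: "norm (sig (Suc j) - sig j) = h"
      unfolding sdiff h_def using Dpos by simp
    have hnorm2: "norm (sig j - sig (Suc j)) = h" using hnorm by (simp add: norm_minus_commute)
    have sj_A: "sig j \<in> ball (sig j) rA \<inter> S" and sj1_A: "sig (Suc j) \<in> ball (sig j) rA \<inter> S"
      using sj consts_pos hrA hnorm2 by (auto simp: dist_norm)
    have sj_B: "sig j \<in> ball (sig j) rB \<inter> S" and sj1_B: "sig (Suc j) \<in> ball (sig j) rB \<inter> S"
      using sj consts_pos hrB hnorm2 by (auto simp: dist_norm)
    note A = hA[unfolded hypA_def]
    have A1: "\<forall>s \<in> ball (sig j) rA \<inter> S.
        wA s \<in> ball (wst j) dA \<and> is_KKT J G (boxZ lo hi) (wA s) s \<and>
        (\<forall>w \<in> ball (wst j) dA. is_KKT J G (boxZ lo hi) w s \<longrightarrow> w = wA s)"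
      using A by (rule conjunct1)
    have A2: "\<forall>s \<in> ball (sig j) rA \<inter> S. \<forall>s' \<in> ball (sig j) rA \<inter> S.
        norm (wA s - wA s') \<le> lamA * norm (Fmap J G (wA s') s - Fmap J G (wA s') s')"
      using A by (rule conjunct1[OF conjunct2])
    have A3: "norm (sig (Suc j) - sig j) < rA \<longrightarrow> wst (Suc j) = wA (sig (Suc j))"
      using A by (rule conjunct2[OF conjunct2])
    have wAj: "wA (sig j) = wst j"
    proof -
      have i1: "wst j \<in> ball (wst j) dA" using consts_pos by simp
      have i2: "is_KKT J G (boxZ lo hi) (wst j) (sig j)" using wst_KKT jD by simp
      show ?thesis using conjunct2[OF conjunct2[OF A1[rule_format, OF sj_A]], rule_format, OF i1 i2] by (rule sym)
    qed
    have wAj1: "wst (Suc j) = wA (sig (Suc j))" using A3 hnorm hrA by simp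
    have wst_ball: "wst (Suc j) \<in> ball (wst j) dA" using A1[rule_format, OF sj1_A] wAj1 by simp
    have wst_close: "norm (wst (Suc j) - wst j) \<le> lamA * lF * h"
    proof -
      have "norm (wst (Suc j) - wst j) \<le> lamA * norm (Fmap J G (wst j) (sig (Suc j)) - Fmap J G (wst j) (sig j))"
        using A2[rule_format, OF sj1_A sj_A] unfolding wAj wAj1[symmetric] .
      also have "\<dots> \<le> lamA * (lF * h)"
        using Fdiff[OF cblk_range P_pos, where J=J and w="wst j" and s="sig (Suc j)" and s'="sig j" and Qc=Qc and gg=gg and T=T] consts_pos
        unfolding G_def[symmetric] lF_def[symmetric] hnorm by simp
      finally show ?thesis by simp
    qed
    note B = hB[unfolded hypB_def]
    have B1: "\<forall>d \<in> ball 0 qB. \<forall>s \<in> ball (sig j) rB \<inter> S.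
        wB d s \<in> ball (wst j) dB \<and>
        gen_eq (boxZ lo hi) (Hmap J G rho (snd (wst j)) (wB d s) d s) (wB d s) \<and>
        (\<forall>w \<in> ball (wst j) dB. gen_eq (boxZ lo hi) (Hmap J G rho (snd (wst j)) w d s) w \<longrightarrow> w = wB d s)"
      using B by (rule conjunct1)
    have B2: "\<forall>d \<in> ball 0 qB. \<forall>s \<in> ball (sig j) rB \<inter> S. \<forall>d' \<in> ball 0 qB. \<forall>s' \<in> ball (sig j) rB \<inter> S.
        norm (wB d s - wB d' s') \<le>
          lamB * norm (Hmap J G rho (snd (wst j)) (wB d' s') d s
                       - Hmap J G rho (snd (wst j)) (wB d' s') d' s')"
      using B by (rule conjunct2)
    define d where "d = (1 / rho) *\<^sub>R (snd (wbar j) - snd (wst j))"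
    define d' where "d' = (1 / rho) *\<^sub>R (snd (wst (Suc j)) - snd (wst j))"
    have nd: "norm d \<le> e j / rho"
    proof -
      have "norm (snd (wbar j) - snd (wst j)) \<le> e j"
        unfolding e_def using nsnd[of "wbar j - wst j"] by simp
      then show ?thesis unfolding d_def using rho_pos by (simp add: divide_right_mono)
    qed
    have d_ball: "d \<in> ball 0 qB"
    proof -
      have "e j / rho < rw / rho" using ej rho_pos by (simp add: divide_strict_right_mono)
      also have "\<dots> < qB" using rw_lt rho_pos by (simp add: pos_divide_less_eq)
      finally show ?thesis using nd by simp
    qed
    have nd': "norm d' \<le> lamA * lF * h / rho"
    proof -
      have "norm (snd (wst (Suc j)) - snd (wst j)) \<le> lamA * lF * h"
        using order_trans[OF nsnd[of "wst (Suc j) - wst j"] wst_close] by simp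
      then show ?thesis unfolding d'_def using rho_pos by (simp add: divide_right_mono)
    qed
    have d'_ball: "d' \<in> ball 0 qB"
    proof -
      have "lamA * lF * h / rho < qB" using lAF_h rho_pos by (simp add: pos_divide_less_eq)
      then show ?thesis using nd' by simp
    qed
    have zero_ball: "(0::real^'c) \<in> ball 0 qB" using consts_pos by simp
    have wB0: "wB 0 (sig j) = wst j"
    proof -
      have i1: "wst j \<in> ball (wst j) dB" using consts_pos by simp
      have "Hmap J G rho (snd (wst j)) (wst j) 0 (sig j) = Fmap J G (wst j) (sig j)"
        by (simp add: Hmap_def Fmap_def)
      moreover have "is_KKT J G (boxZ lo hi) (wst j) (sig j)" using wst_KKT jD by simp
      ultimately have i2: "gen_eq (boxZ lo hi) (Hmap J G rho (snd (wst j)) (wst j) 0 (sig j)) (wst j)"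
        unfolding is_KKT_def by simp
      show ?thesis using conjunct2[OF conjunct2[OF B1[rule_format, OF zero_ball sj_B]], rule_format, OF i1 i2] by (rule sym)
    qed
    have wB1: "wB d' (sig (Suc j)) = wst (Suc j)"
    proof -
      have i1: "wst (Suc j) \<in> ball (wst j) dB" using wst_ball consts_pos by auto
      have "Hmap J G rho (snd (wst j)) (wst (Suc j)) d' (sig (Suc j)) = Fmap J G (wst (Suc j)) (sig (Suc j))"
        by (simp add: Hmap_def Fmap_def d'_def algebra_simps)
      moreover have "is_KKT J G (boxZ lo hi) (wst (Suc j)) (sig (Suc j))" using wst_KKT jD by simp
      ultimately have i2: "gen_eq (boxZ lo hi) (Hmap J G rho (snd (wst j)) (wst (Suc j)) d' (sig (Suc j))) (wst (Suc j))"
        unfolding is_KKT_def by simp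
      show ?thesis using conjunct2[OF conjunct2[OF B1[rule_format, OF d'_ball sj1_B]], rule_format, OF i1 i2] by (rule sym)
    qed
    from hC obtain zinf where
      lim: "(\<lambda>n. (sw (snd (wbar j)) (sig (Suc j)) ^^ n) (fst (wbar j))) \<longlonglongrightarrow> zinf" and
      C1: "d \<in> ball 0 qB \<and> norm (sig (Suc j) - sig j) < rB \<longrightarrow>
            (zinf, snd (wbar j) + rho *\<^sub>R G zinf (sig (Suc j))) = wB d (sig (Suc j))" and
      C2: "norm (fst (wbar j) - zinf) < delta \<longrightarrow>
            norm (fst (wbar (Suc j)) - zinf) \<le> C * real M powr (- psi) * norm (fst (wbar j) - zinf)"
      unfolding hypC_def Let_def d_def by blast
    define winf where "winf = (zinf, snd (wbar j) + rho *\<^sub>R G zinf (sig (Suc j)))"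
    have winf_eq: "winf = wB d (sig (Suc j))" using C1 d_ball hnorm hrB unfolding winf_def by simp
    have zinf_box: "zinf \<in> boxZ lo hi"
      by (rule closed_sequentially[OF box_closed _ lim], rule funpow_in, rule sw_in, assumption, rule fact_box)
    have L1: "norm (winf - wst j) \<le> lamB * lamH * (norm d + h)"
    proof -
      have "norm (winf - wst j) \<le> lamB * norm (Hmap J G rho (snd (wst j)) (wB 0 (sig j)) d (sig (Suc j))
                 - Hmap J G rho (snd (wst j)) (wB 0 (sig j)) 0 (sig j))"
        using B2[rule_format, OF d_ball sj1_B zero_ball sj_B] unfolding winf_eq wB0 .
      also have "\<dots> \<le> lamB * (lamH * norm ((d, sig (Suc j)) - (0, sig j)))"
        by (rule mult_left_mono[OF lamH_Lip[rule_format, of "snd (wst j)" "wB 0 (sig j)" d "sig (Suc j)" 0 "sig j"]]) (use consts_pos in simp)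
      also have "norm ((d, sig (Suc j)) - (0::real^'c, sig j)) \<le> norm d + h"
        using norm_Pair_le[of d "sig (Suc j) - sig j"] hnorm by simp
      then have "lamB * (lamH * norm ((d, sig (Suc j)) - (0, sig j))) \<le> lamB * (lamH * (norm d + h))"
        using consts_pos lamH_pos by (simp add: mult_left_mono)
      finally show ?thesis by simp
    qed
    have L2: "norm (winf - wst (Suc j)) \<le> lamB * lamH * norm (d - d')"
    proof -
      have "norm (winf - wst (Suc j)) \<le> lamB * norm (Hmap J G rho (snd (wst j)) (wB d' (sig (Suc j))) d (sig (Suc j))
                 - Hmap J G rho (snd (wst j)) (wB d' (sig (Suc j))) d' (sig (Suc j)))"
        using B2[rule_format, OF d_ball sj1_B d'_ball sj1_B] unfolding winf_eq wB1 .
      also have "\<dots> \<le> lamB * (lamH * norm ((d, sig (Suc j)) - (d', sig (Suc j))))"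
        by (rule mult_left_mono[OF lamH_Lip[rule_format, of "snd (wst j)" "wB d' (sig (Suc j))" d "sig (Suc j)" d' "sig (Suc j)"]]) (use consts_pos in simp)
      also have "norm ((d, sig (Suc j)) - (d', sig (Suc j))) = norm (d - d')"
        by (simp add: norm_Pair)
      finally show ?thesis by simp
    qed
    have nddd: "norm (d - d') \<le> (e j + lamA * lF * h) / rho"
    proof -
      have "d - d' = (1 / rho) *\<^sub>R (snd (wbar j) - snd (wst (Suc j)))"
        unfolding d_def d'_def by (simp add: algebra_simps)
      moreover have "norm (snd (wbar j) - snd (wst (Suc j))) \<le> e j + lamA * lF * h"
      proof -
        have "norm (snd (wbar j) - snd (wst (Suc j))) \<le> norm (snd (wbar j) - snd (wst j)) + norm (snd (wst j) - snd (wst (Suc j)))"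
          using norm_triangle_ineq[of "snd (wbar j) - snd (wst j)" "snd (wst j) - snd (wst (Suc j))"] by simp
        moreover have "norm (snd (wbar j) - snd (wst j)) \<le> e j"
          unfolding e_def using nsnd[of "wbar j - wst j"] by simp
        moreover have "norm (snd (wst j) - snd (wst (Suc j))) \<le> norm (wst (Suc j) - wst j)"
          using nsnd[of "wst j - wst (Suc j)"] norm_minus_commute[of "wst j" "wst (Suc j)"] by simp
        ultimately show ?thesis using wst_close by linarith
      qed
      ultimately show ?thesis using rho_pos by (simp add: divide_right_mono)
    qed
    have zclose: "norm (fst (wbar j) - zinf) \<le> e j + lamB * lamH * (e j / rho + h)"
    proof -
      have "norm (fst (wbar j) - zinf) \<le> norm (wbar j - winf)"
        using nfst[of "wbar j - winf"] unfolding winf_def by simp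
      also have "\<dots> \<le> norm (wbar j - wst j) + norm (wst j - winf)"
        using norm_triangle_ineq[of "wbar j - wst j" "wst j - winf"] by simp
      also have "norm (wst j - winf) \<le> lamB * lamH * (e j / rho + h)"
      proof -
        have "lamB * lamH * (norm d + h) \<le> lamB * lamH * (e j / rho + h)"
          using nd consts_pos lamH_pos by (simp add: mult_left_mono)
        then show ?thesis using L1 by (simp add: norm_minus_commute)
      qed
      finally show ?thesis unfolding e_def by simp
    qed
    have zdelta: "norm (fst (wbar j) - zinf) < delta"
    proof -
      have "e j + lamB * lamH * (e j / rho + h) = (1 + lamH * lamB / rho) * e j + lamH * lamB * h"
        using rho_pos by (simp add: algebra_simps)
      also have "(1 + lamH * lamB / rho) * e j \<le> (1 + lamH * lamB / rho) * rw"
        using ej consts_pos lamH_pos rho_pos by (intro mult_left_mono) auto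
      moreover have "lamH * lamB * h \<le> lamH * lamB * rs"
        using h_rs consts_pos lamH_pos by (simp add: mult_left_mono)
      ultimately have "e j + lamB * lamH * (e j / rho + h) < delta"
        using rs_delta rw_delta by linarith
      then show ?thesis using zclose by linarith
    qed
    define zM where "zM = fst (wbar (Suc j))"
    have zM_box: "zM \<in> boxZ lo hi" unfolding zM_def by (rule fact_box)
    have C2': "norm (zM - zinf) \<le> K * norm (fst (wbar j) - zinf)"
      using C2 zdelta unfolding zM_def K_def by simp
    have L3: "norm (wbar (Suc j) - winf) \<le> (1 + rho * lamG) * norm (zM - zinf)"
    proof -
      have "wbar (Suc j) - winf = (zM - zinf, rho *\<^sub>R (G zM (sig (Suc j)) - G zinf (sig (Suc j))))"
        using conjunct1[OF wbar_Suc[of j]] unfolding winf_def zM_def by (simp add: prod_eq_iff scaleR_diff_right)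
      then have "norm (wbar (Suc j) - winf) \<le> norm (zM - zinf) + rho * norm (G zM (sig (Suc j)) - G zinf (sig (Suc j)))"
        using norm_Pair_le[of "zM - zinf" "rho *\<^sub>R (G zM (sig (Suc j)) - G zinf (sig (Suc j)))"] rho_pos by simp
      moreover have "norm (G zM (sig (Suc j)) - G zinf (sig (Suc j))) \<le> lamG * norm (zM - zinf)"
        using lamG_Lip zM_box zinf_box by blast
      then have "rho * norm (G zM (sig (Suc j)) - G zinf (sig (Suc j))) \<le> rho * (lamG * norm (zM - zinf))"
        using rho_pos by (simp add: mult_left_mono)
      moreover have "(1 + rho * lamG) * norm (zM - zinf) = norm (zM - zinf) + rho * (lamG * norm (zM - zinf))"
        by (simp add: algebra_simps)
      ultimately show ?thesis by linarith
    qed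
    have "e (Suc j) \<le> norm (wbar (Suc j) - winf) + norm (winf - wst (Suc j))"
      unfolding e_def using norm_triangle_ineq[of "wbar (Suc j) - winf" "winf - wst (Suc j)"] by simp
    also have "\<dots> \<le> (1 + rho * lamG) * (K * (e j + lamB * lamH * (e j / rho + h)))
                  + lamB * lamH * ((e j + lamA * lF * h) / rho)"
    proof -
      have "norm (zM - zinf) \<le> K * (e j + lamB * lamH * (e j / rho + h))"
        using order_trans[OF C2' mult_left_mono[OF zclose K_nonneg]] .
      then have "(1 + rho * lamG) * norm (zM - zinf) \<le> (1 + rho * lamG) * (K * (e j + lamB * lamH * (e j / rho + h)))"
        using rho_pos lamG_pos by (intro mult_left_mono) auto
      moreover have "lamB * lamH * norm (d - d') \<le> lamB * lamH * ((e j + lamA * lF * h) / rho)"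
        by (rule mult_left_mono[OF nddd]) (use consts_pos lamH_pos in simp)
      ultimately show ?thesis using L2 L3 by linarith
    qed
    also have "\<dots> = bw * e j + bs * h"
      unfolding bw_def bs_def beta_w_def beta_s_def K_def lF_def using rho_pos
      by (simp add: field_simps)
    finally show ?thesis .
  qed
  have main: "j \<le> D \<Longrightarrow> e j < rw \<and> e j \<le> bw ^ j * e 0 + bs * h * (\<Sum>i<j. bw ^ i)" for j
  proof (induction j)
    case 0
    then show ?case using init_close by (simp add: e_def wbar_def)
  next
    case (Suc j)
    then have jD: "j < D" and IH: "e j < rw" "e j \<le> bw ^ j * e 0 + bs * h * (\<Sum>i<j. bw ^ i)" by auto
    have st: "e (Suc j) \<le> bw * e j + bs * h" using step jD IH by blast
    have "bw * e j \<le> bw * rw" using IH bw_nonneg by (simp add: mult_left_mono)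
    moreover have "bs * h \<le> bs * rs" using h_rs bs_pos by (simp add: mult_left_mono)
    ultimately have lt: "e (Suc j) < rw" using st bsrs by (simp add: algebra_simps) 
    have "bw * e j \<le> bw * (bw ^ j * e 0 + bs * h * (\<Sum>i<j. bw ^ i))"
      using IH bw_nonneg by (simp add: mult_left_mono)
    also have "bw * (bw ^ j * e 0 + bs * h * (\<Sum>i<j. bw ^ i)) + bs * h
        = bw ^ Suc j * e 0 + bs * h * (\<Sum>i<Suc j. bw ^ i)"
    proof -
      have "(\<Sum>i<Suc j. bw ^ i) = 1 + bw * (\<Sum>i<j. bw ^ i)"
        unfolding sum.lessThan_Suc_shift by (simp add: sum_distrib_left del: sum.lessThan_Suc)
      then show ?thesis by (simp add: algebra_simps)
    qed
    ultimately have "e (Suc j) \<le> bw ^ Suc j * e 0 + bs * h * (\<Sum>i<Suc j. bw ^ i)"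
      using st by linarith
    then show ?case using lt by simp
  qed
  have fin: "e D \<le> bw ^ D * e 0 + bs * h * (\<Sum>i<D. bw ^ i)" using main by simp
  have eq: "bs * (\<Sum>i<D. bw ^ i) / real D * norm (sk1 - sk) = bs * h * (\<Sum>i<D. bw ^ i)"
    unfolding h_def by simp
  show ?thesis using fin eq unfolding e_def wbar_def sw_def bw_def bs_def
    by (simp add: wbar_def)
qed

end
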